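(* Let $\epsilon>0$, $\delta\ge0$, $n\ge 1$, let $\mathscr X$ be a set, $T:\mathscr X^n\to\mathbb{R}$, and let $\{\mu_X: X\in\mathscr X^n\}$ be probability measures on $\mathbb{R}$, each absolutely continuous with respect to Lebesgue measure. Suppose $\mu_X$ depends on $X$ only through $T(X)$ and that the family has monotone likelihood ratio in $T(X)$. Then $\{\mu_X\}$ satisfies $(\epsilon,\delta)$-differential privacy if and only if for all $X_1,X_2\in\mathscr X^n$ with $\delta(X_1,X_2)=1$ and all $t\in\mathbb{R}$, $$\mu_{X_1}((-\infty,t))\le e^\epsilon\mu_{X_2}((-\infty,t))+\delta\quad\text{and}\quad \mu_{X_1}((t,\infty))\le e^\epsilon\mu_{X_2}((t,\infty))+\delta.$$
   Context: The Hamming distance on $\mathscr X^n$ is $\delta(X,X')=\#\{i:X_i\ne X'_i\}$. The family $\{\mu_X: X\in\mathscr X^n\}$ satisfies $(\epsilon,\delta)$-differential privacy if for every Borel $B\subseteq\mathbb{R}$ and all $X,X'$ with $\delta(X,X')=1$, $\mu_X(B)\le e^\epsilon\mu_{X'}(B)+\delta$. Monotone likelihood ratio in $T(X)$: writing $f_X$ for the Lebesgue density of $\mu_X$, whenever $T(X)>T(X')$ the ratio $f_X(t)/f_{X'}(t)$ is nondecreasing in $t$. *)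

theory Defs
  imports "HOL-Probability.Probability"
begin

definition tuples :: "'a set \<Rightarrow> nat \<Rightarrow> 'a list set" where
  "tuples Xs n = {X. length X = n \<and> set X \<subseteq> Xs}"

definition hamming :: "nat \<Rightarrow> 'a list \<Rightarrow> 'a list \<Rightarrow> nat" where
  "hamming n X X' = card {i. i < n \<and> X ! i \<noteq> X' ! i}"

definition diff_private ::
  "'a set \<Rightarrow> nat \<Rightarrow> ('a list \<Rightarrow> real measure) \<Rightarrow> real \<Rightarrow> real \<Rightarrow> bool" where
  "diff_private Xs n \<mu> \<epsilon> \<delta> \<longleftrightarrow>
     (\<forall>X\<in>tuples Xs n. \<forall>X'\<in>tuples Xs n. hamming n X X' = 1 \<longrightarrow>
        (\<forall>B\<in>sets borel. measure (\<mu> X) B \<le> exp \<epsilon> * measure (\<mu> X') B + \<delta>))"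

text \<open>Monotone likelihood ratio in T, for the Lebesgue densities f X of mu X:
  whenever T X > T X', the ratio f X t / f X' t is nondecreasing in t
  (stated in cross-multiplied form, to handle vanishing denominators).\<close>
definition mlr ::
  "'a set \<Rightarrow> nat \<Rightarrow> ('a list \<Rightarrow> real) \<Rightarrow> ('a list \<Rightarrow> real \<Rightarrow> real) \<Rightarrow> bool" where
  "mlr Xs n T f \<longleftrightarrow>
     (\<forall>X\<in>tuples Xs n. \<forall>X'\<in>tuples Xs n. T X > T X' \<longrightarrow>
        (\<forall>s t. s \<le> t \<longrightarrow> f X s * f X' t \<le> f X t * f X' s))"

end

theory Submission
  imports Defs
begin

lemma dens_mono:
  fixes f g :: "real \<Rightarrow> real" and c :: real
  assumes f: "f \<in> borel_measurable borel" and g: "g \<in> borel_measurable borel"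
    and fnn: "\<forall>t. f t \<ge> 0" and gnn: "\<forall>t. g t \<ge> 0" and c: "c > 0"
    and P2: "prob_space (density lborel (\<lambda>t. ennreal (g t)))"
    and E: "E \<in> sets borel" and AE: "AE x in lborel. x \<in> E \<longrightarrow> f x \<le> c * g x"
  shows "measure (density lborel (\<lambda>t. ennreal (f t))) E \<le> c * measure (density lborel (\<lambda>t. ennreal (g t))) E"
proof -
  let ?M1 = "density lborel (\<lambda>t. ennreal (f t))" and ?M2 = "density lborel (\<lambda>t. ennreal (g t))"
  have E': "E \<in> sets lborel" using E by simp
  have "emeasure ?M1 E = (\<integral>\<^sup>+ x. ennreal (f x) * indicator E x \<partial>lborel)"
    using f E' by (simp add: emeasure_density)
  also have "\<dots> \<le> (\<integral>\<^sup>+ x. ennreal c * (ennreal (g x) * indicator E x) \<partial>lborel)"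
  proof (rule nn_integral_mono_AE)
    show "AE x in lborel. ennreal (f x) * indicator E x \<le> ennreal c * (ennreal (g x) * indicator E x)"
      using AE
    proof (eventually_elim)
      case (elim x)
      show ?case
      proof (cases "x \<in> E")
        case True
        then have "f x \<le> c * g x" using elim by simp
        then have "ennreal (f x) \<le> ennreal c * ennreal (g x)"
          using c gnn by (simp add: ennreal_mult[symmetric])
        then show ?thesis using True by simp
      qed simp
    qed
  qed
  also have "\<dots> = ennreal c * (\<integral>\<^sup>+ x. ennreal (g x) * indicator E x \<partial>lborel)"
    using g E' by (intro nn_integral_cmult) auto
  also have "\<dots> = ennreal c * emeasure ?M2 E"
    using g E' by (simp add: emeasure_density)
  finally have le: "emeasure ?M1 E \<le> ennreal c * emeasure ?M2 E" .
  have fin: "emeasure ?M2 E \<noteq> \<infinity>" using P2 by (simp add: prob_space_def finite_measure.emeasure_finite)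
  then have "ennreal c * emeasure ?M2 E \<noteq> \<infinity>" by (simp add: ennreal_mult_eq_top_iff)
  then have "enn2real (emeasure ?M1 E) \<le> enn2real (ennreal c * emeasure ?M2 E)"
    using le by (intro enn2real_mono) (auto simp: top_unique less_top)
  also have "\<dots> = c * enn2real (emeasure ?M2 E)"
    using c by (simp add: enn2real_mult)
  finally show ?thesis by (simp add: measure_def)
qed


lemma key:
  fixes f g :: "real \<Rightarrow> real" and c :: real
  assumes f: "f \<in> borel_measurable borel" and g: "g \<in> borel_measurable borel"
    and fnn: "\<forall>t. f t \<ge> 0" and gnn: "\<forall>t. g t \<ge> 0" and c: "c > 0"
    and P1: "prob_space (density lborel (\<lambda>t. ennreal (f t)))"
    and P2: "prob_space (density lborel (\<lambda>t. ennreal (g t)))"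
    and A: "A \<in> sets borel" and inA: "\<forall>x\<in>A. c * g x \<le> f x"
    and outA: "AE x in lborel. x \<notin> A \<longrightarrow> f x \<le> c * g x"
    and B: "B \<in> sets borel"
  shows "measure (density lborel (\<lambda>t. ennreal (f t))) B - c * measure (density lborel (\<lambda>t. ennreal (g t))) B
       \<le> measure (density lborel (\<lambda>t. ennreal (f t))) A - c * measure (density lborel (\<lambda>t. ennreal (g t))) A"
proof -
  let ?M1 = "density lborel (\<lambda>t. ennreal (f t))" and ?M2 = "density lborel (\<lambda>t. ennreal (g t))"
  interpret M1: prob_space ?M1 by (rule P1)
  interpret M2: prob_space ?M2 by (rule P2)
  have sB: "B \<inter> A \<in> sets borel" "B - A \<in> sets borel" "A - B \<in> sets borel" using A B by auto
  have dB1: "measure ?M1 B = measure ?M1 (B \<inter> A) + measure ?M1 (B - A)"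
    proof -
    have "B = (B \<inter> A) \<union> (B - A)" "(B \<inter> A) \<inter> (B - A) = {}" by auto
    then show ?thesis using M1.finite_measure_Union[of "B \<inter> A" "B - A"] sB by simp
  qed
  have dB2: "measure ?M2 B = measure ?M2 (B \<inter> A) + measure ?M2 (B - A)"
    proof -
    have "B = (B \<inter> A) \<union> (B - A)" "(B \<inter> A) \<inter> (B - A) = {}" by auto
    then show ?thesis using M2.finite_measure_Union[of "B \<inter> A" "B - A"] sB by simp
  qed
  have dA1: "measure ?M1 A = measure ?M1 (B \<inter> A) + measure ?M1 (A - B)"
    proof -
    have "A = (B \<inter> A) \<union> (A - B)" "(B \<inter> A) \<inter> (A - B) = {}" by auto
    then show ?thesis using M1.finite_measure_Union[of "B \<inter> A" "A - B"] sB by simp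
  qed
  have dA2: "measure ?M2 A = measure ?M2 (B \<inter> A) + measure ?M2 (A - B)"
    proof -
    have "A = (B \<inter> A) \<union> (A - B)" "(B \<inter> A) \<inter> (A - B) = {}" by auto
    then show ?thesis using M2.finite_measure_Union[of "B \<inter> A" "A - B"] sB by simp
  qed
  have l1: "measure ?M1 (B - A) \<le> c * measure ?M2 (B - A)"
    by (rule dens_mono[OF f g fnn gnn c P2 sB(2)]) (use outA in auto)
  have l2: "c * measure ?M2 (A - B) \<le> measure ?M1 (A - B)"
  proof -
    have "measure ?M2 (A - B) \<le> (1/c) * measure ?M1 (A - B)"
    proof (rule dens_mono[OF g f gnn fnn])
      show "0 < 1/c" using c by simp
      show "prob_space ?M1" by (rule P1)
      show "A - B \<in> sets borel" by (rule sB(3))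
      show "AE x in lborel. x \<in> A - B \<longrightarrow> g x \<le> 1 / c * f x"
        using inA c by (auto simp: field_simps)
    qed
    then show ?thesis using c by (simp add: field_simps)
  qed
  show ?thesis using dB1 dB2 dA1 dA2 l1 l2 by (simp add: algebra_simps)
qed

lemma choose_up:
  fixes F G :: "real \<Rightarrow> real" and c :: real
  assumes c: "c > 0" and Gnn: "\<forall>t. G t \<ge> 0" and Fnn: "\<forall>t. F t \<ge> 0"
    and mono: "\<forall>s t. s \<le> t \<longrightarrow> F s * G t \<le> F t * G s"
  shows "\<exists>A z. (A = {} \<or> A = UNIV \<or> (\<exists>t. A = {t<..})) \<and> (\<forall>x\<in>A. c * G x \<le> F x)
              \<and> (\<forall>x. x \<notin> A \<longrightarrow> x \<noteq> z \<longrightarrow> F x \<le> c * G x)"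
proof -
  define S where "S = {t. F t > c * G t}"
  have step: "c * G t \<le> F t" if s: "s \<in> S" "s \<le> t" for s t
  proof (cases "G s = 0")
    case True
    have "F s > 0" using s True by (simp add: S_def)
    moreover have "F s * G t \<le> 0" using mono s True by force
    ultimately have "G t \<le> 0" by (simp add: mult_le_0_iff)
    then have "G t = 0" using Gnn by (meson order_antisym)
    then show ?thesis using Fnn by simp
  next
    case False
    have gs: "G s > 0" using Gnn[rule_format, of s] False by linarith
    have "c * G s * G t \<le> F s * G t"
      using s Gnn by (intro mult_right_mono) (auto simp: S_def)
    also have "\<dots> \<le> F t * G s" using mono s by blast
    finally have "(c * G t) * G s \<le> F t * G s" by (simp add: algebra_simps)
    then show ?thesis using gs by simp
  qed
  show ?thesis
  proof (cases "S = {}")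
    case True
    then show ?thesis by (intro exI[of _ "{}"] exI[of _ 0]) (auto simp: S_def not_less)
  next
    case ne: False
    show ?thesis
    proof (cases "bdd_below S")
      case False
      have "c * G x \<le> F x" for x
      proof -
        from False obtain s where "s \<in> S" "\<not> x \<le> s" unfolding bdd_below_def by blast
        then show ?thesis using step[of s x] by simp
      qed
      then show ?thesis by (intro exI[of _ UNIV] exI[of _ 0]) auto
    next
      case True
      define t0 where "t0 = Inf S"
      have "c * G x \<le> F x" if "x > t0" for x
      proof -
        from that obtain s where "s \<in> S" "s < x" using cInf_less_iff[OF ne True] t0_def by blast
        then show ?thesis using step[of s x] by simp
      qed
      moreover have "F x \<le> c * G x" if "x \<le> t0" "x \<noteq> t0" for x
      proof (rule ccontr)
        assume "\<not> F x \<le> c * G x"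
        then have "x \<in> S" by (simp add: S_def)
        then have "t0 \<le> x" using cInf_lower[OF _ True] t0_def by blast
        then show False using that by simp
      qed
      ultimately show ?thesis
        by (intro exI[of _ "{t0<..}"] exI[of _ t0]) (auto simp: not_less)
    qed
  qed
qed


lemma choose_down:
  fixes F G :: "real \<Rightarrow> real" and c :: real
  assumes c: "c > 0" and Gnn: "\<forall>t. G t \<ge> 0" and Fnn: "\<forall>t. F t \<ge> 0"
    and mono: "\<forall>s t. s \<le> t \<longrightarrow> G s * F t \<le> G t * F s"
  shows "\<exists>A z. (A = {} \<or> A = UNIV \<or> (\<exists>t. A = {..<t})) \<and> (\<forall>x\<in>A. c * G x \<le> F x)
              \<and> (\<forall>x. x \<notin> A \<longrightarrow> x \<noteq> z \<longrightarrow> F x \<le> c * G x)"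
proof -
  have mono': "\<forall>s t. s \<le> t \<longrightarrow> F (-s) * G (-t) \<le> F (-t) * G (-s)"
  proof (intro allI impI)
    fix s t :: real assume "s \<le> t"
    then have "-t \<le> -s" by simp
    then show "F (-s) * G (-t) \<le> F (-t) * G (-s)" using mono by (simp add: mult.commute)
  qed
  obtain A' z' where A': "A' = {} \<or> A' = UNIV \<or> (\<exists>t. A' = {t<..})"
    and in': "\<forall>x\<in>A'. c * G (-x) \<le> F (-x)"
    and out': "\<forall>x. x \<notin> A' \<longrightarrow> x \<noteq> z' \<longrightarrow> F (-x) \<le> c * G (-x)"
    using choose_up[of c "\<lambda>x. G (-x)" "\<lambda>x. F (-x)"] c Gnn Fnn mono' by blast
  have mem: "x \<in> uminus ` A' \<longleftrightarrow> -x \<in> A'" for x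
    by (metis image_iff minus_minus)
  show ?thesis
  proof (intro exI[of _ "uminus ` A'"] exI[of _ "-z'"] conjI)
    show "uminus ` A' = {} \<or> uminus ` A' = UNIV \<or> (\<exists>t. uminus ` A' = {..<t})"
      using A' by (auto simp: surj_def)
    show "\<forall>x\<in>uminus ` A'. c * G x \<le> F x" using in' by auto
    show "\<forall>x. x \<notin> uminus ` A' \<longrightarrow> x \<noteq> - z' \<longrightarrow> F x \<le> c * G x"
      using out' mem by (metis minus_minus)
  qed
qed

lemma final:
  fixes F G :: "real \<Rightarrow> real" and c \<delta> :: real
  assumes f: "F \<in> borel_measurable borel" and g: "G \<in> borel_measurable borel"
    and fnn: "\<forall>t. F t \<ge> 0" and gnn: "\<forall>t. G t \<ge> 0" and c: "c \<ge> 1" and del: "\<delta> \<ge> 0"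
    and P1: "prob_space (density lborel (\<lambda>t. ennreal (F t)))"
    and P2: "prob_space (density lborel (\<lambda>t. ennreal (G t)))"
    and Ashape: "A = {} \<or> A = UNIV \<or> (\<exists>t. A = {t<..}) \<or> (\<exists>t. A = {..<t})"
    and inA: "\<forall>x\<in>A. c * G x \<le> F x"
    and outA: "\<forall>x. x \<notin> A \<longrightarrow> x \<noteq> z \<longrightarrow> F x \<le> c * G x"
    and hyp: "\<forall>t. measure (density lborel (\<lambda>t. ennreal (F t))) {..<t} \<le> c * measure (density lborel (\<lambda>t. ennreal (G t))) {..<t} + \<delta>
          \<and> measure (density lborel (\<lambda>t. ennreal (F t))) {t<..} \<le> c * measure (density lborel (\<lambda>t. ennreal (G t))) {t<..} + \<delta>"
    and B: "B \<in> sets borel"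
  shows "measure (density lborel (\<lambda>t. ennreal (F t))) B \<le> c * measure (density lborel (\<lambda>t. ennreal (G t))) B + \<delta>"
proof -
  let ?M1 = "density lborel (\<lambda>t. ennreal (F t))" and ?M2 = "density lborel (\<lambda>t. ennreal (G t))"
  have Ab: "A \<in> sets borel" using Ashape by auto
  have ae: "AE x in lborel. x \<notin> A \<longrightarrow> F x \<le> c * G x"
    using AE_lborel_singleton[of z] by eventually_elim (use outA in auto)
  have k: "measure ?M1 B - c * measure ?M2 B \<le> measure ?M1 A - c * measure ?M2 A"
    by (rule key[OF f g fnn gnn _ P1 P2 Ab inA ae B]) (use c in simp)
  have "measure ?M1 A - c * measure ?M2 A \<le> \<delta>"
  proof -
    { assume "A = {}" then have ?thesis using del by simp }
    moreover
    { assume AU: "A = UNIV"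
      have "measure ?M1 UNIV = 1" using prob_space.prob_space[OF P1] by simp
      moreover have "measure ?M2 UNIV = 1" using prob_space.prob_space[OF P2] by simp
      ultimately have ?thesis using AU c del by simp }
    moreover
    { assume "\<exists>t. A = {t<..}"
      then obtain t where "A = {t<..}" by blast
      then have ?thesis using hyp[rule_format, of t] by simp }
    moreover
    { assume "\<exists>t. A = {..<t}"
      then obtain t where "A = {..<t}" by blast
      then have ?thesis using hyp[rule_format, of t] by simp }
    ultimately show ?thesis using Ashape by blast
  qed
  then show ?thesis using k by simp
qed


theorem lemma6:
  fixes Xs :: "'a set" and n :: nat and T :: "'a list \<Rightarrow> real"
    and \<mu> :: "'a list \<Rightarrow> real measure" and \<epsilon> \<delta> :: real
  assumes eps: "\<epsilon> > 0" and del: "\<delta> \<ge> 0" and n: "n \<ge> 1"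
    and prob: "\<And>X. X \<in> tuples Xs n \<Longrightarrow> prob_space (\<mu> X)"
    and sets: "\<And>X. X \<in> tuples Xs n \<Longrightarrow> sets (\<mu> X) = sets borel"
    and ac: "\<And>X. X \<in> tuples Xs n \<Longrightarrow> absolutely_continuous lborel (\<mu> X)"
    and dep: "\<And>X X'. X \<in> tuples Xs n \<Longrightarrow> X' \<in> tuples Xs n \<Longrightarrow> T X = T X' \<Longrightarrow> \<mu> X = \<mu> X'"
    and dens: "\<exists>f. (\<forall>X\<in>tuples Xs n. f X \<in> borel_measurable borel \<and> (\<forall>t. f X t \<ge> 0)
                    \<and> \<mu> X = density lborel (\<lambda>t. ennreal (f X t)))
                 \<and> mlr Xs n T f"
  shows "diff_private Xs n \<mu> \<epsilon> \<delta> \<longleftrightarrow>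
    (\<forall>X1\<in>tuples Xs n. \<forall>X2\<in>tuples Xs n. hamming n X1 X2 = 1 \<longrightarrow>
       (\<forall>t. measure (\<mu> X1) {..<t} \<le> exp \<epsilon> * measure (\<mu> X2) {..<t} + \<delta>
          \<and> measure (\<mu> X1) {t<..} \<le> exp \<epsilon> * measure (\<mu> X2) {t<..} + \<delta>))"
proof
  assume dp: "diff_private Xs n \<mu> \<epsilon> \<delta>"
  show "\<forall>X1\<in>tuples Xs n. \<forall>X2\<in>tuples Xs n. hamming n X1 X2 = 1 \<longrightarrow>
       (\<forall>t. measure (\<mu> X1) {..<t} \<le> exp \<epsilon> * measure (\<mu> X2) {..<t} + \<delta>
          \<and> measure (\<mu> X1) {t<..} \<le> exp \<epsilon> * measure (\<mu> X2) {t<..} + \<delta>)"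
    using dp unfolding diff_private_def by auto
next
  assume H: "\<forall>X1\<in>tuples Xs n. \<forall>X2\<in>tuples Xs n. hamming n X1 X2 = 1 \<longrightarrow>
       (\<forall>t. measure (\<mu> X1) {..<t} \<le> exp \<epsilon> * measure (\<mu> X2) {..<t} + \<delta>
          \<and> measure (\<mu> X1) {t<..} \<le> exp \<epsilon> * measure (\<mu> X2) {t<..} + \<delta>)"
  obtain f where fprop: "\<forall>X\<in>tuples Xs n. f X \<in> borel_measurable borel \<and> (\<forall>t. f X t \<ge> 0)
                    \<and> \<mu> X = density lborel (\<lambda>t. ennreal (f X t))" and ml: "mlr Xs n T f"
    using dens by blast
  have c1: "exp \<epsilon> \<ge> 1" using eps by simp
  have c0: "exp \<epsilon> > 0" by simp
  show "diff_private Xs n \<mu> \<epsilon> \<delta>"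
    unfolding diff_private_def
  proof (intro ballI impI)
    fix X1 X2 and B :: "real set" assume X1: "X1 \<in> tuples Xs n" and X2: "X2 \<in> tuples Xs n"
      and hd: "hamming n X1 X2 = 1" and B: "B \<in> sets borel"
    note hyp0 = H[rule_format, OF X1 X2 hd]
    show "measure (\<mu> X1) B \<le> exp \<epsilon> * measure (\<mu> X2) B + \<delta>"
    proof (cases "T X1 = T X2")
      case True
      then have e: "\<mu> X1 = \<mu> X2" using dep X1 X2 by blast
      have "measure (\<mu> X2) B \<le> exp \<epsilon> * measure (\<mu> X2) B"
        using mult_right_mono[OF c1 measure_nonneg[of "\<mu> X2" B]] by simp
      then show ?thesis using e del by simp
    next
      case False
      let ?F = "f X1" and ?G = "f X2"
      have F: "?F \<in> borel_measurable borel" "\<forall>t. ?F t \<ge> 0" "\<mu> X1 = density lborel (\<lambda>t. ennreal (?F t))"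
        using fprop X1 by auto
      have G: "?G \<in> borel_measurable borel" "\<forall>t. ?G t \<ge> 0" "\<mu> X2 = density lborel (\<lambda>t. ennreal (?G t))"
        using fprop X2 by auto
      have P1: "prob_space (density lborel (\<lambda>t. ennreal (?F t)))" using prob[OF X1] F(3) by simp
      have P2: "prob_space (density lborel (\<lambda>t. ennreal (?G t)))" using prob[OF X2] G(3) by simp
      have hyp: "\<forall>t. measure (density lborel (\<lambda>t. ennreal (?F t))) {..<t} \<le> exp \<epsilon> * measure (density lborel (\<lambda>t. ennreal (?G t))) {..<t} + \<delta>
          \<and> measure (density lborel (\<lambda>t. ennreal (?F t))) {t<..} \<le> exp \<epsilon> * measure (density lborel (\<lambda>t. ennreal (?G t))) {t<..} + \<delta>"
        using hyp0 F(3) G(3) by simp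
      obtain A z where Ashape: "A = {} \<or> A = UNIV \<or> (\<exists>t. A = {t<..}) \<or> (\<exists>t. A = {..<t})"
        and inA: "\<forall>x\<in>A. exp \<epsilon> * ?G x \<le> ?F x"
        and outA: "\<forall>x. x \<notin> A \<longrightarrow> x \<noteq> z \<longrightarrow> ?F x \<le> exp \<epsilon> * ?G x"
      proof (cases "T X1 > T X2")
        case True
        then have "\<forall>s t. s \<le> t \<longrightarrow> ?F s * ?G t \<le> ?F t * ?G s"
          using ml X1 X2 unfolding mlr_def by blast
        then show ?thesis using choose_up[OF c0 G(2) F(2)] that by blast
      next
        case False
        then have "T X2 > T X1" using \<open>T X1 \<noteq> T X2\<close> by simp
        then have "\<forall>s t. s \<le> t \<longrightarrow> ?G s * ?F t \<le> ?G t * ?F s"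
          using ml X1 X2 unfolding mlr_def by blast
        then show ?thesis using choose_down[OF c0 G(2) F(2)] that by blast
      qed
      have "measure (density lborel (\<lambda>t. ennreal (?F t))) B \<le> exp \<epsilon> * measure (density lborel (\<lambda>t. ennreal (?G t))) B + \<delta>"
        by (rule final[OF F(1) G(1) F(2) G(2) c1 del P1 P2 Ashape inA outA hyp B])
      then show ?thesis using F(3) G(3) by simp
    qed
  qed
qed

end
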